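(* For every $n\geq 1$, there exists an NFA $M$ with $n+1$ states over a three-letter alphabet $\Sigma$, with a single initial state and all states final, such that any NFA accepting the complement $\Sigma^*\setminus L(M)$ has at least $2^n$ states.
   Context: An NFA is a quintuple $M=(Q,\Sigma,\delta,q_0,F)$ with finite state set $Q$, transition function $\delta: Q\times\Sigma\to 2^Q$, initial state $q_0$ and final states $F$; $L(M)$ is the set of words $w$ with $\delta(q_0,w)\cap F\ne\emptyset$. *)

theory Defs
  imports Main
begin

text \<open>An NFA (Q, delta, q0, F) with states taken from nat (any finite state set can be
renamed into nat) and letters of type 'a; the alphabet Alph is a separate set.\<close>

record 'a nfa =
  states :: "nat set"
  delta  :: "nat \<Rightarrow> 'a \<Rightarrow> nat set"
  init   :: nat
  final  :: "nat set"

definition wf_nfa :: "'a set \<Rightarrow> 'a nfa \<Rightarrow> bool" where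
  "wf_nfa Alph M \<longleftrightarrow> finite (states M) \<and> init M \<in> states M \<and> final M \<subseteq> states M
     \<and> (\<forall>q\<in>states M. \<forall>a\<in>Alph. delta M q a \<subseteq> states M)"

fun delta_star :: "'a nfa \<Rightarrow> nat set \<Rightarrow> 'a list \<Rightarrow> nat set" where
  "delta_star M S [] = S"
| "delta_star M S (a # w) = delta_star M (\<Union>q\<in>S. delta M q a) w"

definition lang :: "'a set \<Rightarrow> 'a nfa \<Rightarrow> 'a list set" where
  "lang Alph M = {w \<in> lists Alph. delta_star M {init M} w \<inter> final M \<noteq> {}}"

end

theory Submission
  imports Defs
begin

lemma ds_append: "delta_star M S (xs @ ys) = delta_star M (delta_star M S xs) ys"
  by (induction xs arbitrary: S) auto

lemma ds_empty: "delta_star M {} w = {}"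
  by (induction w) auto

lemma ds_union: "delta_star M S w = (\<Union>q\<in>S. delta_star M {q} w)"
proof (induction w arbitrary: S)
  case Nil then show ?case by auto
next
  case (Cons a w)
  have "delta_star M S (a # w) = delta_star M (\<Union>q\<in>S. delta M q a) w" by simp
  also have "\<dots> = (\<Union>p\<in>(\<Union>q\<in>S. delta M q a). delta_star M {p} w)"
    by (rule Cons.IH)
  also have "\<dots> = (\<Union>q\<in>S. \<Union>p\<in>delta M q a. delta_star M {p} w)" by blast
  also have "\<dots> = (\<Union>q\<in>S. delta_star M (delta M q a) w)"
    using Cons.IH by (metis (no_types))
  also have "\<dots> = (\<Union>q\<in>S. delta_star M {q} (a # w))" by simp
  finally show ?case .
qed

lemma ds_states:
  assumes "wf_nfa Alph M" "S \<subseteq> states M" "w \<in> lists Alph"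
  shows "delta_star M S w \<subseteq> states M"
  using assms(2,3)
proof (induction w arbitrary: S)
  case Nil then show ?case by simp
next
  case (Cons a w)
  have d: "\<forall>q\<in>states M. \<forall>a\<in>Alph. delta M q a \<subseteq> states M" using assms(1) unfolding wf_nfa_def by simp
  have "(\<Union>q\<in>S. delta M q a) \<subseteq> states M"
  proof
    fix x assume "x \<in> (\<Union>q\<in>S. delta M q a)"
    then obtain q where "q \<in> S" "x \<in> delta M q a" by blast
    moreover have "a \<in> Alph" using Cons.prems by simp
    ultimately show "x \<in> states M" using d Cons.prems(1) by blast
  qed
  moreover have "w \<in> lists Alph" using Cons.prems by simp
  ultimately have "delta_star M (\<Union>q\<in>S. delta M q a) w \<subseteq> states M" by (rule Cons.IH)
  then show ?case by simp
qed

lemma fooling: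
  assumes wf: "wf_nfa Alph M'"
    and acc: "\<forall>i\<in>I. x i @ y i \<in> lang Alph M'"
    and fool: "\<forall>i\<in>I. \<forall>j\<in>I. i \<noteq> j \<longrightarrow> x i @ y j \<notin> lang Alph M' \<or> x j @ y i \<notin> lang Alph M'"
  shows "card I \<le> card (states M')"
proof -
  have "\<forall>i\<in>I. \<exists>p. p \<in> delta_star M' {init M'} (x i) \<and> delta_star M' {p} (y i) \<inter> final M' \<noteq> {}
          \<and> p \<in> states M'"
  proof
    fix i assume i: "i \<in> I"
    have l: "x i @ y i \<in> lists Alph" and ne: "delta_star M' {init M'} (x i @ y i) \<inter> final M' \<noteq> {}"
      using acc i unfolding lang_def by auto
    have "delta_star M' {init M'} (x i @ y i) =
          (\<Union>p\<in>delta_star M' {init M'} (x i). delta_star M' {p} (y i))"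
      by (metis ds_append ds_union)
    with ne obtain p where p: "p \<in> delta_star M' {init M'} (x i)"
      "delta_star M' {p} (y i) \<inter> final M' \<noteq> {}" by auto
    have "delta_star M' {init M'} (x i) \<subseteq> states M'"
      using ds_states[OF wf, of "{init M'}" "x i"] wf l unfolding wf_nfa_def by auto
    with p show "\<exists>p. p \<in> delta_star M' {init M'} (x i) \<and> delta_star M' {p} (y i) \<inter> final M' \<noteq> {}
          \<and> p \<in> states M'" by auto
  qed
  then obtain f where f: "\<forall>i\<in>I. f i \<in> delta_star M' {init M'} (x i) \<and>
      delta_star M' {f i} (y i) \<inter> final M' \<noteq> {} \<and> f i \<in> states M'"
    by metis
  have mem: "x i @ y j \<in> lang Alph M'" if "i \<in> I" "j \<in> I" "f i = f j" for i j
  proof -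
    have "x i @ y i \<in> lists Alph" "x j @ y j \<in> lists Alph" using acc that unfolding lang_def by auto
    then have l: "x i @ y j \<in> lists Alph" by auto
    have "delta_star M' {init M'} (x i @ y j) =
          (\<Union>p\<in>delta_star M' {init M'} (x i). delta_star M' {p} (y j))"
      by (metis ds_append ds_union)
    moreover have "f i \<in> delta_star M' {init M'} (x i)" "delta_star M' {f i} (y j) \<inter> final M' \<noteq> {}"
      using f that by auto
    ultimately have "delta_star M' {init M'} (x i @ y j) \<inter> final M' \<noteq> {}" by blast
    with l show ?thesis unfolding lang_def by auto
  qed
  have "inj_on f I"
  proof (rule inj_onI)
    fix i j assume "i \<in> I" "j \<in> I" "f i = f j"
    then show "i = j" using mem[of i j] mem[of j i] fool by metis
  qed
  moreover have "f ` I \<subseteq> states M'" using f by auto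
  moreover have "finite (states M')" using wf unfolding wf_nfa_def by auto
  ultimately show ?thesis by (meson card_inj_on_le)
qed

definition dd :: "nat \<Rightarrow> nat \<Rightarrow> nat \<Rightarrow> nat set" where
  "dd n q x = (if x = 0 then (if q = n then {n, 0} else if q < n then {Suc q mod n} else {})
     else if x = 1 then (if q = n then {n} else if q < n \<and> q \<noteq> 0 then {q} else {})
     else if x = 2 then (if q < n then {q} else {}) else {})"

definition MM :: "nat \<Rightarrow> nat nfa" where
  "MM n = \<lparr>states = {..n}, delta = dd n, init = n, final = {..n}\<rparr>"

lemma MM_simps[simp]: "states (MM n) = {..n}" "delta (MM n) = dd n" "init (MM n) = n" "final (MM n) = {..n}"
  by (auto simp: MM_def)

lemma dd_sub: "n \<ge> 1 \<Longrightarrow> dd n q x \<subseteq> {..n}"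
  unfolding dd_def by auto

lemma MM_ds_sub: "n \<ge> 1 \<Longrightarrow> S \<subseteq> {..n} \<Longrightarrow> delta_star (MM n) S w \<subseteq> {..n}"
proof (induction w arbitrary: S)
  case Nil then show ?case by simp
next
  case (Cons a w)
  have "(\<Union>q\<in>S. dd n q a) \<subseteq> {..n}" using dd_sub[OF Cons.prems(1)] by blast
  then show ?case using Cons by simp
qed

lemma rotk: "n \<ge> 1 \<Longrightarrow> q < n \<Longrightarrow> delta_star (MM n) {q} (replicate k 0) = {(q + k) mod n}"
proof (induction k arbitrary: q)
  case 0 then show ?case by simp
next
  case (Suc k)
  have "delta_star (MM n) {q} (replicate (Suc k) 0) = delta_star (MM n) {Suc q mod n} (replicate k 0)"
    using Suc.prems by (simp add: dd_def)
  also have "\<dots> = {(Suc q mod n + k) mod n}" using Suc by simp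
  also have "\<dots> = {(q + Suc k) mod n}" by (simp add: mod_add_left_eq)
  finally show ?case .
qed

definition z :: "nat \<Rightarrow> nat \<Rightarrow> nat list" where
  "z n s = replicate (n - s) 0 @ [1] @ replicate s 0"

lemma zkill:
  assumes n: "n \<ge> 1" and s: "s < n" and q: "q < n"
  shows "delta_star (MM n) {q} (z n s) = (if q = s then {} else {q})"
proof -
  have 1: "delta_star (MM n) {q} (replicate (n - s) 0) = {(q + (n - s)) mod n}"
    using rotk n q by blast
  have zsplit: "z n s = (replicate (n - s) 0 @ [1]) @ replicate s 0" by (simp add: z_def)
  show ?thesis
  proof (cases "q = s")
    case True
    then have "(q + (n - s)) mod n = 0" using s by simp
    then have "delta_star (MM n) {q} (replicate (n - s) 0 @ [1]) = {}"
      using 1 n by (simp add: ds_append dd_def)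
    then show ?thesis using True zsplit by (simp only: ds_append ds_empty) simp
  next
    case False
    define r where "r = (q + (n - s)) mod n"
    have rv: "r = (if s \<le> q then q - s else q + n - s)"
    proof (cases "s \<le> q")
      case True
      then have "q + (n - s) = (q - s) + n" using s by simp
      then have "r = ((q - s) + n) mod n" unfolding r_def by simp
      also have "\<dots> = q - s" using q by simp
      finally show ?thesis using True by simp
    next
      case False then show ?thesis using q s unfolding r_def by simp
    qed
    have r0: "r \<noteq> 0" "r < n" using rv \<open>q \<noteq> s\<close> q s by auto
    have "delta_star (MM n) {q} (replicate (n - s) 0 @ [1]) = {r}"
      using 1 r0 n by (simp add: ds_append dd_def r_def)
    moreover have "(r + s) mod n = q" using rv q s by auto
    ultimately show ?thesis using False rotk[OF n r0(2), of s] zsplit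
      by (simp only: ds_append) simp
  qed
qed

lemma zset:
  assumes n: "n \<ge> 1" and s: "s < n" and A: "A \<subseteq> {..<n}"
  shows "delta_star (MM n) A (z n s) = A - {s}"
proof -
  have "delta_star (MM n) A (z n s) = (\<Union>q\<in>A. delta_star (MM n) {q} (z n s))" by (rule ds_union)
  also have "\<dots> = (\<Union>q\<in>A. if q = s then {} else {q})"
    using zkill[OF n s] A by (intro SUP_cong) auto
  also have "\<dots> = A - {s}" by auto
  finally show ?thesis .
qed

lemma z_lists: "z n s \<in> lists {0,1,2}"
  by (auto simp: z_def)

lemma killword:
  assumes n: "n \<ge> 1" and S: "S \<subseteq> {..<n}"
  shows "\<exists>y \<in> lists {0,1,2}. \<forall>A \<subseteq> {..<n}. delta_star (MM n) A y = A - S"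
proof -
  have "finite S" by (rule finite_subset[OF S finite_lessThan])
  then show ?thesis using S
  proof (induction S rule: finite_induct)
    case empty
    show ?case by (rule bexI[of _ "[]"]) auto
  next
    case (insert s S)
    have SS: "S \<subseteq> {..<n}" and s: "s < n" using insert.prems by auto
    obtain y where y: "y \<in> lists {0,1,2}" "\<forall>A \<subseteq> {..<n}. delta_star (MM n) A y = A - S"
      using insert.IH[OF SS] by blast
    show ?case
    proof (rule bexI[of _ "z n s @ y"])
      show "z n s @ y \<in> lists {0,1,2}" using y(1) z_lists[of n s] by (rule append_in_lists_conv[THEN iffD2, OF conjI, rotated])
      show "\<forall>A\<subseteq>{..<n}. delta_star (MM n) A (z n s @ y) = A - insert s S"
      proof (intro allI impI)
        fix A :: "nat set" assume A: "A \<subseteq> {..<n}"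
        have As: "A - {s} \<subseteq> {..<n}" using A by blast
        have "delta_star (MM n) A (z n s @ y) = delta_star (MM n) (A - {s}) y"
          using zset[OF n s A] by (simp only: ds_append)
        also have "\<dots> = A - {s} - S" by (rule y(2)[rule_format, OF As])
        finally show "delta_star (MM n) A (z n s @ y) = A - insert s S" by auto
      qed
    qed
  qed
qed

lemma fill: "n \<ge> 1 \<Longrightarrow> k \<le> n \<Longrightarrow> delta_star (MM n) {n} (replicate k 0) = insert n {..<k}"
proof (induction k)
  case 0 then show ?case by simp
next
  case (Suc k)
  have "replicate (Suc k) (0::nat) = replicate k 0 @ [0]" by (simp add: replicate_append_same)
  then have "delta_star (MM n) {n} (replicate (Suc k) 0) = delta_star (MM n) (insert n {..<k}) [0]"
    using Suc by (simp add: ds_append)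
  also have "\<dots> = (\<Union>q\<in>insert n {..<k}. dd n q 0)" by simp
  also have "\<dots> = insert n {..<Suc k}"
  proof -
    have "\<And>q. q < k \<Longrightarrow> dd n q 0 = {Suc q}" using Suc.prems by (auto simp: dd_def)
    then have "(\<Union>q\<in>{..<k}. dd n q 0) = Suc ` {..<k}" by auto
    moreover have "dd n n 0 = {n, 0}" by (simp add: dd_def)
    moreover have "insert 0 (Suc ` {..<k}) = {..<Suc k}" using lessThan_Suc_eq_insert_0 by auto
    ultimately show ?thesis by auto
  qed
  finally show ?case .
qed

lemma reachword:
  assumes n: "n \<ge> 1" and S: "S \<subseteq> {..<n}"
  shows "\<exists>x \<in> lists {0,1,2}. delta_star (MM n) {n} x = S"
proof -
  obtain y where y: "y \<in> lists {0,1,2}" "\<forall>A \<subseteq> {..<n}. delta_star (MM n) A y = A - ({..<n} - S)"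
    using killword[OF n, of "{..<n} - S"] by auto
  have "delta_star (MM n) {n} (replicate n 0 @ [2]) = delta_star (MM n) (insert n {..<n}) [2]"
    using fill[OF n, of n] by (simp add: ds_append)
  also have "\<dots> = {..<n}" by (auto simp: dd_def)
  finally have e: "delta_star (MM n) {n} (replicate n 0 @ [2]) = {..<n}" .
  have "delta_star (MM n) {n} ((replicate n 0 @ [2]) @ y) = delta_star (MM n) {..<n} y"
    using e by (simp only: ds_append)
  also have "\<dots> = {..<n} - ({..<n} - S)" using y(2) by blast
  also have "\<dots> = S" using S by auto
  finally have "delta_star (MM n) {n} ((replicate n 0 @ [2]) @ y) = S" .
  moreover have "(replicate n 0 @ [2]) @ y \<in> lists {0,1,2}" using y by auto
  ultimately show ?thesis by blast
qed

lemma langMM: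
  assumes n: "n \<ge> 1"
  shows "w \<in> lang {0,1,2} (MM n) \<longleftrightarrow> w \<in> lists {0,1,2} \<and> delta_star (MM n) {n} w \<noteq> {}"
proof -
  have "delta_star (MM n) {n} w \<subseteq> {..n}" using MM_ds_sub[OF n, of "{n}" w] by simp
  then have e: "delta_star (MM n) {n} w \<inter> {..n} = delta_star (MM n) {n} w" by (rule Int_absorb2)
  have "w \<in> lang {0,1,2} (MM n) \<longleftrightarrow> w \<in> lists {0,1,2} \<and> delta_star (MM n) {n} w \<inter> {..n} \<noteq> {}"
    unfolding lang_def by simp
  then show ?thesis unfolding e .
qed

theorem mainTheorem15:
  fixes n :: nat
  assumes "n \<ge> 1"
  shows "\<exists>(Alph :: nat set) (M :: nat nfa).
           card Alph = 3 \<and> wf_nfa Alph M \<and> card (states M) = n + 1 \<and> final M = states M \<and>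
           (\<forall>M' :: nat nfa. wf_nfa Alph M' \<and> lang Alph M' = lists Alph - lang Alph M
              \<longrightarrow> card (states M') \<ge> 2 ^ n)"
proof (intro exI conjI allI impI)
  let ?A = "{0,1,2::nat}"
  let ?M = "MM n"
  show "card ?A = 3" by simp
  show "wf_nfa ?A ?M" unfolding wf_nfa_def using dd_sub[OF assms] by auto
  show "card (states ?M) = n + 1" by simp
  show "final ?M = states ?M" by simp
  fix M' :: "nat nfa"
  assume H: "wf_nfa ?A M' \<and> lang ?A M' = lists ?A - lang ?A ?M"
  have langM: "w \<in> lang ?A ?M \<longleftrightarrow> w \<in> lists ?A \<and> delta_star ?M {n} w \<noteq> {}" for w
    by (rule langMM[OF assms])
  define Y where "Y S = (SOME y. y \<in> lists ?A \<and> (\<forall>A \<subseteq> {..<n}. delta_star ?M A y = A - S))" for S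
  define X where "X S = (SOME x. x \<in> lists ?A \<and> delta_star ?M {n} x = S)" for S
  have Y: "Y S \<in> lists ?A \<and> (\<forall>A \<subseteq> {..<n}. delta_star ?M A (Y S) = A - S)" if "S \<in> Pow {..<n}" for S
  proof -
    have "S \<subseteq> {..<n}" using that by simp
    from killword[OF assms this] obtain y where
      "y \<in> lists ?A" "\<forall>A \<subseteq> {..<n}. delta_star ?M A y = A - S" by (elim bexE)
    then have "y \<in> lists ?A \<and> (\<forall>A \<subseteq> {..<n}. delta_star ?M A y = A - S)" by (rule conjI)
    then show ?thesis unfolding Y_def by (rule someI)
  qed
  have X: "X S \<in> lists ?A \<and> delta_star ?M {n} (X S) = S" if "S \<in> Pow {..<n}" for S
  proof -
    have "S \<subseteq> {..<n}" using that by simp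
    from reachword[OF assms this] obtain x where
      "x \<in> lists ?A" "delta_star ?M {n} x = S" by (elim bexE)
    then have "x \<in> lists ?A \<and> delta_star ?M {n} x = S" by (rule conjI)
    then show ?thesis unfolding X_def by (rule someI)
  qed
  have comb: "delta_star ?M {n} (X S @ Y T) = S - T" if "S \<in> Pow {..<n}" "T \<in> Pow {..<n}" for S T
  proof -
    have "delta_star ?M {n} (X S @ Y T) = delta_star ?M (delta_star ?M {n} (X S)) (Y T)" by (rule ds_append)
    also have "\<dots> = delta_star ?M S (Y T)" using X[OF that(1)] by simp
    also have "\<dots> = S - T" using Y[OF that(2)] that(1) by simp
    finally show ?thesis .
  qed
  have lists: "X S @ Y T \<in> lists ?A" if "S \<in> Pow {..<n}" "T \<in> Pow {..<n}" for S T
    using X[OF that(1)] Y[OF that(2)] by simp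
  have "card (Pow {..<n}) \<le> card (states M')"
  proof (rule fooling[where x = X and y = Y])
    show "wf_nfa ?A M'" using H by simp
    show "\<forall>i\<in>Pow {..<n}. X i @ Y i \<in> lang ?A M'"
      using H comb lists langM by auto
    show "\<forall>i\<in>Pow {..<n}. \<forall>j\<in>Pow {..<n}. i \<noteq> j \<longrightarrow> X i @ Y j \<notin> lang ?A M' \<or> X j @ Y i \<notin> lang ?A M'"
    proof (intro ballI impI)
      fix i j assume ij: "i \<in> Pow {..<n}" "j \<in> Pow {..<n}" "i \<noteq> j"
      then have "i - j \<noteq> {} \<or> j - i \<noteq> {}" by blast
      then show "X i @ Y j \<notin> lang ?A M' \<or> X j @ Y i \<notin> lang ?A M'"
        using H comb[OF ij(1,2)] comb[OF ij(2,1)] lists[OF ij(1,2)] lists[OF ij(2,1)] langM by auto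
    qed
  qed
  then show "card (states M') \<ge> 2 ^ n" by (simp add: card_Pow)
qed

end
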